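(* Assume the Framework and the Purification Postulate. Let $\{\rho_i\}_{i\in X}$ be a preparation-test for system $\mathrm A$ (a test from $\mathrm I$ to $\mathrm A$), let $\rho:=\sum_{i\in X}\rho_i$, and let $\Psi\in\mathfrak S_1(\mathrm A\mathrm B)$ be any purification of $\rho$. Then there is an observation-test $\{b_i\}_{i\in X}$ on $\mathrm B$ (a test from $\mathrm B$ to $\mathrm I$) such that $\rho_i=(\mathcal I_{\mathrm A}\otimes b_i)\Psi$ for every $i\in X$. Moreover, the purifying system $\mathrm B$ and the purification $\Psi$ can be chosen such that the observation-test $\{b_i\}_{i\in X}$ with this property is discriminating, i.e. there are normalized states $\{\sigma_i\}_{i\in X}\subseteq\mathfrak S_1(\mathrm B)$ with $(b_j|\sigma_i)=\delta_{ij}$.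
   Context: Framework. We work in an operational-probabilistic theory: there is a collection of systems $\mathrm A,\mathrm B,\dots$, closed under a composition $\mathrm A\mathrm B$ (associative, symmetric up to a reversible swap, with a trivial system $\mathrm I$ satisfying $\mathrm A\mathrm I=\mathrm A$); for each pair of systems a set $\mathfrak T(\mathrm A,\mathrm B)$ of transformations; a test from $\mathrm A$ to $\mathrm B$ is a finite collection $\{\mathcal C_i\}_{i\in X}\subseteq\mathfrak T(\mathrm A,\mathrm B)$, and every transformation belongs to some test. Tests are closed under sequential composition, parallel composition ($\otimes$), coarse-graining (summing outcomes over the blocks of a partition of $X$) and conditioning (choosing the next test depending on the outcome of the previous one). States of $\mathrm A$ are the elements of $\mathfrak S(\mathrm A):=\mathfrak T(\mathrm I,\mathrm A)$, effects are the elements of $\mathfrak T(\mathrm A,\mathrm I)$, and transformations $\mathrm I\to\mathrm I$ are probabilities in $[0,1]$ (those of a test sum to $1$; composition is multiplication). An effect $a$ and a state $\rho$ give the probability $(a|\rho)$. States (effects) are identified when they give equal probabilities on all effects (states); transformations $\mathcal C,\mathcal C'$ are identified when $\mathcal C\otimes\mathcal I_{\mathrm S}$ and $\mathcal C'\otimes\mathcal I_{\mathrm S}$ act identically on all states of $\mathrm A\mathrm S$ for every system $\mathrm S$. States span a finite-dimensional real vector space $\mathfrak S_{\mathbb R}(\mathrm A)$, transformations act linearly, and $\mathfrak T_{\mathbb R}(\mathrm A,\mathrm B)$ is the real span of $\mathfrak T(\mathrm A,\mathrm B)$. Standing assumptions: (i) causality: each system $\mathrm A$ has a unique deterministic effect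 $e_{\mathrm A}$ (the effect forming a one-outcome observation test), and $e_{\mathrm A\mathrm B}=e_{\mathrm A}\otimes e_{\mathrm B}$; (ii) local discriminability: if two states of $\mathrm A\mathrm B$ differ, some product effect $a\otimes b$ gives them different probabilities; (iii) all sets of states are closed, the theory is not deterministic (hence all sets of states, effects and transformations are convex), and perfectly distinguishable states exist. A state $\rho$ is normalized if $(e|\rho)=1$; $\mathfrak S_1(\mathrm A)$ is the set of normalized states. A channel is a $\mathcal C\in\mathfrak T(\mathrm A,\mathrm B)$ with $e_{\mathrm B}\circ\mathcal C=e_{\mathrm A}$. A channel $\mathcal U\in\mathfrak T(\mathrm A,\mathrm B)$ is reversible if some channel $\mathcal W\in\mathfrak T(\mathrm B,\mathrm A)$ satisfies $\mathcal W\mathcal U=\mathcal I_{\mathrm A}$, $\mathcal U\mathcal W=\mathcal I_{\mathrm B}$; $\mathbf G_{\mathrm A}$ is the group of reversible channels on $\mathrm A$. The marginal of a state $\sigma$ of $\mathrm A\mathrm B$ on $\mathrm A$ is $(\mathcal I_{\mathrm A}\otimes e_{\mathrm B})\sigma$. Refinement. For $\mathcal C\in\mathfrak T(\mathrm A,\mathrm B)$, write $\mathcal D\prec\mathcal C$ if there are a test $\{\mathcal D_j\}_{j\in Y}$ and $Y_0\subseteq Y$ with $\mathcal C=\sum_{j\in Y_0}\mathcal D_j$ and $\mathcal D\in\{\mathcal D_j\}_{j\in Y_0}$; the refinement set is $D_{\mathcal C}=\{\mathcal D:\mathcal D\prec\mathcal C\}$. $\mathcal C$ is atomic if $\mathcal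 D\prec\mathcal C$ implies $\mathcal D=\lambda\mathcal C$ for some $\lambda\in[0,1]$. A pure state is an atomic state; a state is mixed otherwise. Purification Postulate. For every $\rho\in\mathfrak S_1(\mathrm A)$ there are a system $\mathrm B$ and a pure $\Psi\in\mathfrak S_1(\mathrm A\mathrm B)$ with $(\mathcal I_{\mathrm A}\otimes e_{\mathrm B})\Psi=\rho$ (a purification of $\rho$, with purifying system $\mathrm B$); and if $\Psi,\Psi'\in\mathfrak S_1(\mathrm A\mathrm B)$ are purifications of the same state, then $\Psi'=(\mathcal I_{\mathrm A}\otimes\mathcal U)\Psi$ for some $\mathcal U\in\mathbf G_{\mathrm B}$. *)

theory Defs
  imports "HOL-Analysis.Analysis"
begin

text \<open>
  Systems have type 's; transformations of all types live in one real
  vector space 't (the real span of transformations), with a typing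
  predicate o_T A B = the set of transformations from A to B.
  Tests from A to B are finite outcome-indexed families, represented as
  lists (outcome set = list positions); coarse-graining is sum, and tests
  are closed under reindexing (permutation).
  o_seq D C is the sequential composition "first C, then D" (D o C);
  o_par is the parallel composition; o_id A the identity of A.
  Probabilities (transformations I -> I) are identified with the scalar
  multiples p *R (o_id I), p in [0,1]; probability 1 is o_id I, 0 is 0.
\<close>

record ('s, 't) opt_struct =
  o_I :: 's
  o_comp :: "'s \<Rightarrow> 's \<Rightarrow> 's"
  o_T :: "'s \<Rightarrow> 's \<Rightarrow> 't set"
  o_tests :: "'s \<Rightarrow> 's \<Rightarrow> 't list set"
  o_seq :: "'t \<Rightarrow> 't \<Rightarrow> 't"
  o_par :: "'t \<Rightarrow> 't \<Rightarrow> 't"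
  o_id :: "'s \<Rightarrow> 't"

definition states :: "('s, 't) opt_struct \<Rightarrow> 's \<Rightarrow> 't set" where
  "states T0 A = o_T T0 (o_I T0) A"

definition effects :: "('s, 't) opt_struct \<Rightarrow> 's \<Rightarrow> 't set" where
  "effects T0 A = o_T T0 A (o_I T0)"

definition one :: "('s, 't) opt_struct \<Rightarrow> 't" where
  "one T0 = o_id T0 (o_I T0)"

definition eff :: "('s, 't) opt_struct \<Rightarrow> 's \<Rightarrow> 't" where
  "eff T0 A = (THE e. [e] \<in> o_tests T0 A (o_I T0))"

definition normalized_states :: "('s, 't) opt_struct \<Rightarrow> 's \<Rightarrow> 't set" where
  "normalized_states T0 A = {\<rho> \<in> states T0 A. o_seq T0 (eff T0 A) \<rho> = one T0}"

definition channel :: "('s, 't) opt_struct \<Rightarrow> 's \<Rightarrow> 's \<Rightarrow> 't \<Rightarrow> bool" where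
  "channel T0 A B C \<longleftrightarrow> C \<in> o_T T0 A B \<and> o_seq T0 (eff T0 B) C = eff T0 A"

definition reversible :: "('s, 't) opt_struct \<Rightarrow> 's \<Rightarrow> 's \<Rightarrow> 't \<Rightarrow> bool" where
  "reversible T0 A B U \<longleftrightarrow> channel T0 A B U \<and>
     (\<exists>W. channel T0 B A W \<and> o_seq T0 W U = o_id T0 A \<and> o_seq T0 U W = o_id T0 B)"

definition revgroup :: "('s, 't) opt_struct \<Rightarrow> 's \<Rightarrow> 't set" where
  "revgroup T0 A = {U. reversible T0 A A U}"

definition refines :: "('s, 't::comm_monoid_add) opt_struct \<Rightarrow> 's \<Rightarrow> 's \<Rightarrow> 't \<Rightarrow> 't \<Rightarrow> bool" where
  "refines T0 A B D C \<longleftrightarrow>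
     (\<exists>t \<in> o_tests T0 A B. \<exists>Y0 \<subseteq> {..<length t}.
        C = (\<Sum>j\<in>Y0. t ! j) \<and> (\<exists>j\<in>Y0. D = t ! j))"

definition atomic :: "('s, 't::real_vector) opt_struct \<Rightarrow> 's \<Rightarrow> 's \<Rightarrow> 't \<Rightarrow> bool" where
  "atomic T0 A B C \<longleftrightarrow> C \<in> o_T T0 A B \<and>
     (\<forall>D. refines T0 A B D C \<longrightarrow> (\<exists>l::real. 0 \<le> l \<and> l \<le> 1 \<and> D = l *\<^sub>R C))"

definition pure_state :: "('s, 't::real_vector) opt_struct \<Rightarrow> 's \<Rightarrow> 't \<Rightarrow> bool" where
  "pure_state T0 A \<rho> \<longleftrightarrow> atomic T0 (o_I T0) A \<rho>"

definition marginal :: "('s, 't) opt_struct \<Rightarrow> 's \<Rightarrow> 's \<Rightarrow> 't \<Rightarrow> 't" where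
  "marginal T0 A B \<sigma> = o_seq T0 (o_par T0 (o_id T0 A) (eff T0 B)) \<sigma>"

definition purification :: "('s, 't::real_vector) opt_struct \<Rightarrow> 's \<Rightarrow> 's \<Rightarrow> 't \<Rightarrow> 't \<Rightarrow> bool" where
  "purification T0 A B \<rho> \<Psi> \<longleftrightarrow>
     \<Psi> \<in> normalized_states T0 (o_comp T0 A B) \<and> pure_state T0 (o_comp T0 A B) \<Psi> \<and>
     marginal T0 A B \<Psi> = \<rho>"

locale opt =
  fixes T0 :: "('s, 't::real_normed_vector) opt_struct"
  assumes comp_assoc: "o_comp T0 (o_comp T0 A B) C = o_comp T0 A (o_comp T0 B C)"
    and comp_unit_right: "o_comp T0 A (o_I T0) = A"
    and comp_unit_left: "o_comp T0 (o_I T0) A = A"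
    and seq_bilinear: "bilinear (o_seq T0)"
    and par_bilinear: "bilinear (o_par T0)"
    and seq_T: "\<lbrakk>x \<in> o_T T0 A B; y \<in> o_T T0 B C\<rbrakk> \<Longrightarrow> o_seq T0 y x \<in> o_T T0 A C"
    and par_T: "\<lbrakk>x \<in> o_T T0 A B; y \<in> o_T T0 A' B'\<rbrakk>
                 \<Longrightarrow> o_par T0 x y \<in> o_T T0 (o_comp T0 A A') (o_comp T0 B B')"
    and seq_assoc: "o_seq T0 z (o_seq T0 y x) = o_seq T0 (o_seq T0 z y) x"
    and par_assoc: "o_par T0 (o_par T0 x y) z = o_par T0 x (o_par T0 y z)"
    and id_T: "o_id T0 A \<in> o_T T0 A A"
    and id_test: "[o_id T0 A] \<in> o_tests T0 A A"
    and seq_id_left: "x \<in> o_T T0 A B \<Longrightarrow> o_seq T0 (o_id T0 B) x = x"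
    and seq_id_right: "x \<in> o_T T0 A B \<Longrightarrow> o_seq T0 x (o_id T0 A) = x"
    and par_id: "o_par T0 (o_id T0 A) (o_id T0 B) = o_id T0 (o_comp T0 A B)"
    and par_unit_right: "o_par T0 x (o_id T0 (o_I T0)) = x"
    and par_unit_left: "o_par T0 (o_id T0 (o_I T0)) x = x"
    and interchange: "\<lbrakk>x \<in> o_T T0 A B; y \<in> o_T T0 B C; x' \<in> o_T T0 A' B'; y' \<in> o_T T0 B' C'\<rbrakk>
        \<Longrightarrow> o_seq T0 (o_par T0 y y') (o_par T0 x x') = o_par T0 (o_seq T0 y x) (o_seq T0 y' x')"
    and swap: "\<exists>sw. \<forall>A B. reversible T0 (o_comp T0 A B) (o_comp T0 B A) (sw A B) \<and>
        (\<forall>C D x y. x \<in> o_T T0 A C \<longrightarrow> y \<in> o_T T0 B D \<longrightarrow>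
           o_seq T0 (sw C D) (o_par T0 x y) = o_seq T0 (o_par T0 y x) (sw A B))"
    and tests_T: "t \<in> o_tests T0 A B \<Longrightarrow> set t \<subseteq> o_T T0 A B"
    and T_in_test: "x \<in> o_T T0 A B \<Longrightarrow> \<exists>t \<in> o_tests T0 A B. x \<in> set t"
    and tests_perm: "\<lbrakk>t \<in> o_tests T0 A B; mset t' = mset t\<rbrakk> \<Longrightarrow> t' \<in> o_tests T0 A B"
    and tests_coarse: "x # y # t \<in> o_tests T0 A B \<Longrightarrow> (x + y) # t \<in> o_tests T0 A B"
    and tests_cond: "\<lbrakk>t \<in> o_tests T0 A B; \<forall>i < length t. u i \<in> o_tests T0 B C\<rbrakk>
        \<Longrightarrow> concat (map (\<lambda>i. map (\<lambda>y. o_seq T0 y (t ! i)) (u i)) [0..<length t]) \<in> o_tests T0 A C"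
    and tests_par: "\<lbrakk>t \<in> o_tests T0 A B; t' \<in> o_tests T0 A' B'\<rbrakk>
        \<Longrightarrow> concat (map (\<lambda>x. map (\<lambda>y. o_par T0 x y) t') t) \<in> o_tests T0 (o_comp T0 A A') (o_comp T0 B B')"
    and scalars: "o_T T0 (o_I T0) (o_I T0) \<subseteq> {p *\<^sub>R one T0 | p. 0 \<le> p \<and> p \<le> 1}"
    and test_prob: "t \<in> o_tests T0 (o_I T0) (o_I T0) \<Longrightarrow> sum_list t = one T0"
    and state_ext: "\<lbrakk>\<rho> \<in> states T0 A; \<rho>' \<in> states T0 A;
        \<forall>a \<in> effects T0 A. o_seq T0 a \<rho> = o_seq T0 a \<rho>'\<rbrakk> \<Longrightarrow> \<rho> = \<rho>'"
    and effect_ext: "\<lbrakk>a \<in> effects T0 A; a' \<in> effects T0 A;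
        \<forall>\<rho> \<in> states T0 A. o_seq T0 a \<rho> = o_seq T0 a' \<rho>\<rbrakk> \<Longrightarrow> a = a'"
    and trans_ext: "\<lbrakk>x \<in> o_T T0 A B; y \<in> o_T T0 A B;
        \<forall>S. \<forall>\<rho> \<in> states T0 (o_comp T0 A S).
           o_seq T0 (o_par T0 x (o_id T0 S)) \<rho> = o_seq T0 (o_par T0 y (o_id T0 S)) \<rho>\<rbrakk> \<Longrightarrow> x = y"
    and fin_dim: "\<exists>F. finite F \<and> states T0 A \<subseteq> span F"
    and causal: "\<exists>!e. [e] \<in> o_tests T0 A (o_I T0)"
    and causal_par: "eff T0 (o_comp T0 A B) = o_par T0 (eff T0 A) (eff T0 B)"
    and local_discr: "\<lbrakk>\<rho> \<in> states T0 (o_comp T0 A B); \<rho>' \<in> states T0 (o_comp T0 A B); \<rho> \<noteq> \<rho>'\<rbrakk>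
        \<Longrightarrow> \<exists>a \<in> effects T0 A. \<exists>b \<in> effects T0 B.
              o_seq T0 (o_par T0 a b) \<rho> \<noteq> o_seq T0 (o_par T0 a b) \<rho>'"
    and closed_states: "closed (states T0 A)"
    and nondet: "\<exists>x \<in> o_T T0 (o_I T0) (o_I T0). x \<noteq> 0 \<and> x \<noteq> one T0"
    and convex_T: "convex (o_T T0 A B)"
    and distinguishable: "\<exists>A \<rho>0 \<rho>1 a0 a1. \<rho>0 \<in> normalized_states T0 A \<and> \<rho>1 \<in> normalized_states T0 A \<and>
        [a0, a1] \<in> o_tests T0 A (o_I T0) \<and>
        o_seq T0 a0 \<rho>0 = one T0 \<and> o_seq T0 a1 \<rho>1 = one T0 \<and> o_seq T0 a0 \<rho>1 = 0 \<and> o_seq T0 a1 \<rho>0 = 0"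

locale opt_purif = opt +
  assumes purif_exists: "\<rho> \<in> normalized_states T0 A \<Longrightarrow> \<exists>B \<Psi>. purification T0 A B \<rho> \<Psi>"
    and purif_unique: "\<lbrakk>purification T0 A B \<rho> \<Psi>; purification T0 A B \<rho> \<Psi>'\<rbrakk>
        \<Longrightarrow> \<exists>U \<in> revgroup T0 B. \<Psi>' = o_seq T0 (o_par T0 (o_id T0 A) U) \<Psi>"

end

theory Submission
  imports Defs
begin


context opt
begin

abbreviation sq where "sq \<equiv> o_seq T0"
abbreviation pr where "pr \<equiv> o_par T0"
abbreviation idd where "idd \<equiv> o_id T0"
abbreviation II where "II \<equiv> o_I T0"
abbreviation TT where "TT \<equiv> o_T T0"
abbreviation tests where "tests \<equiv> o_tests T0"

lemma sq_ladd: "sq (x + y) z = sq x z + sq y z" using seq_bilinear bilinear_ladd by metis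
lemma sq_radd: "sq z (x + y) = sq z x + sq z y" using seq_bilinear bilinear_radd by metis
lemma sq_lmul: "sq (c *\<^sub>R x) z = c *\<^sub>R sq x z" using seq_bilinear bilinear_lmul by metis
lemma sq_rmul: "sq z (c *\<^sub>R x) = c *\<^sub>R sq z x" using seq_bilinear bilinear_rmul by metis
lemma sq_lzero: "sq 0 z = 0" using seq_bilinear bilinear_lzero by metis
lemma sq_rzero: "sq z 0 = 0" using seq_bilinear bilinear_rzero by metis
lemma pr_ladd: "pr (x + y) z = pr x z + pr y z" using par_bilinear bilinear_ladd by metis
lemma pr_radd: "pr z (x + y) = pr z x + pr z y" using par_bilinear bilinear_radd by metis
lemma pr_lmul: "pr (c *\<^sub>R x) z = c *\<^sub>R pr x z" using par_bilinear bilinear_lmul by metis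
lemma pr_rmul: "pr z (c *\<^sub>R x) = c *\<^sub>R pr z x" using par_bilinear bilinear_rmul by metis
lemma pr_lzero: "pr 0 z = 0" using par_bilinear bilinear_lzero by metis
lemma pr_rzero: "pr z 0 = 0" using par_bilinear bilinear_rzero by metis

lemma sq_lsum: "sq (sum_list xs) z = sum_list (map (\<lambda>x. sq x z) xs)"
  by (induction xs) (auto simp: sq_ladd sq_lzero)
lemma sq_rsum: "sq z (sum_list xs) = sum_list (map (\<lambda>x. sq z x) xs)"
  by (induction xs) (auto simp: sq_radd sq_rzero)
lemma pr_lsum: "pr (sum_list xs) z = sum_list (map (\<lambda>x. pr x z) xs)"
  by (induction xs) (auto simp: pr_ladd pr_lzero)
lemma pr_rsum: "pr z (sum_list xs) = sum_list (map (\<lambda>x. pr z x) xs)"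
  by (induction xs) (auto simp: pr_radd pr_rzero)

lemma eff_test: "[eff T0 A] \<in> tests A II"
  unfolding eff_def using causal theI' by metis

lemma eff_unique: "[e] \<in> tests A II \<Longrightarrow> eff T0 A = e"
  using eff_test causal by metis

lemma eff_T: "eff T0 A \<in> TT A II"
  using tests_T eff_test by fastforce

lemma eff_I: "eff T0 II = one T0"
  using eff_unique id_test unfolding one_def by metis

lemma one_T: "one T0 \<in> TT II II" unfolding one_def using id_T by simp

lemma one_ne0: "one T0 \<noteq> 0"
proof
  assume "one T0 = 0"
  from nondet obtain x where "x \<in> TT II II" "x \<noteq> 0" by blast
  with scalars \<open>one T0 = 0\<close> show False by auto
qed

lemma scalar: "x \<in> TT II II \<Longrightarrow> \<exists>p. 0 \<le> p \<and> p \<le> 1 \<and> x = p *\<^sub>R one T0"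
  using scalars by auto

lemma sq_one_left: "x \<in> TT A II \<Longrightarrow> sq (one T0) x = x"
  unfolding one_def using seq_id_left by blast
lemma sq_one_right: "x \<in> TT II A \<Longrightarrow> sq x (one T0) = x"
  unfolding one_def using seq_id_right by blast
lemma pr_one_left: "pr (one T0) x = x" unfolding one_def using par_unit_left by blast
lemma pr_one_right: "pr x (one T0) = x" unfolding one_def using par_unit_right by blast
lemma one_one: "sq (one T0) (one T0) = one T0" using sq_one_left one_T by blast

lemma coarse_gen: "x # xs @ ys \<in> tests A B \<Longrightarrow> (x + sum_list xs) # ys \<in> tests A B"
proof (induction xs arbitrary: x)
  case (Cons y zs)
  then have "(x + y) # zs @ ys \<in> tests A B" using tests_coarse by simp
  from Cons.IH[OF this] show ?case by (simp add: add.assoc)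
qed simp

lemma prefix_sum: "xs \<noteq> [] \<Longrightarrow> xs @ ys \<in> tests A B \<Longrightarrow> sum_list xs # ys \<in> tests A B"
  by (cases xs) (auto dest: coarse_gen)

lemma prefix_sum_T: "xs \<noteq> [] \<Longrightarrow> xs @ ys \<in> tests A B \<Longrightarrow> sum_list xs \<in> TT A B"
  using prefix_sum tests_T by fastforce

lemma sum_test_eff:
  assumes "t \<in> tests A II" "t \<noteq> []" shows "sum_list t = eff T0 A"
proof -
  from prefix_sum[of t "[]"] assms have "[sum_list t] \<in> tests A II" by simp
  then show ?thesis using eff_unique by metis
qed

lemma mset_split:
  "(\<forall>i\<in>set ks. mset (u i) = mset (fs i @ rs i)) \<Longrightarrow>
   mset (concat (map (\<lambda>i. map (G i) (u i)) ks)) =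
   mset (concat (map (\<lambda>i. map (G i) (fs i)) ks)) + mset (concat (map (\<lambda>i. map (G i) (rs i)) ks))"
proof (induction ks)
  case (Cons i ks)
  have "mset (map (G i) (u i)) = mset (map (G i) (fs i)) + mset (map (G i) (rs i))"
    using Cons.prems by (metis mset_append mset_map image_mset_union list.set_intros(1))
  with Cons show ?case by (simp add: ac_simps)
qed simp

lemma cond_sel:
  assumes "t \<in> tests A B" "\<forall>i<length t. u i \<in> tests B C \<and> mset (u i) = mset (fs i @ rs i)"
  shows "concat (map (\<lambda>i. map (\<lambda>y. sq y (t!i)) (fs i)) [0..<length t]) @
         concat (map (\<lambda>i. map (\<lambda>y. sq y (t!i)) (rs i)) [0..<length t]) \<in> tests A C"
proof -
  have T: "concat (map (\<lambda>i. map (\<lambda>y. sq y (t!i)) (u i)) [0..<length t]) \<in> tests A C"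
    using tests_cond assms by blast
  show ?thesis
    apply (rule tests_perm[OF T])
    using mset_split[of "[0..<length t]" u fs rs "\<lambda>i y. sq y (t!i)"] assms(2) by simp
qed

lemma map_idx: "map (\<lambda>i. f (L!i)) [0..<length L] = map f L"
  by (rule nth_equalityI) auto

lemma cond_const:
  assumes "t \<in> tests A B" "t' \<in> tests B C"
  shows "concat (map (\<lambda>x. map (\<lambda>y. sq y x) t') t) \<in> tests A C"
proof -
  have "concat (map (\<lambda>i. map (\<lambda>y. sq y (t!i)) t') [0..<length t]) \<in> tests A C"
    using tests_cond[OF assms(1), of "\<lambda>_. t'"] assms(2) by blast
  then show ?thesis using map_idx[of "\<lambda>x. map (\<lambda>y. sq y x) t'" t] by simp
qed

lemma mset_split2:
  "mset t' = mset (fs @ rs) \<Longrightarrow>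
   mset (concat (map (\<lambda>x. map (F x) t') L)) =
   mset (concat (map (\<lambda>x. map (F x) fs) L)) + mset (concat (map (\<lambda>x. map (F x) rs) L))"
proof (induction L)
  case (Cons x L)
  have "mset (map (F x) t') = mset (map (F x) fs) + mset (map (F x) rs)"
    using Cons.prems by (metis mset_append mset_map image_mset_union)
  with Cons show ?case by (simp add: ac_simps)
qed simp

lemma push:
  assumes "xs @ ys \<in> tests A B" "t' \<in> tests B C" "mset t' = mset (fsel @ rsel)"
  shows "\<exists>zs. concat (map (\<lambda>x. map (\<lambda>f. sq f x) fsel) xs) @ zs \<in> tests A C"
proof -
  let ?F = "\<lambda>x f. sq f x"
  have T: "concat (map (\<lambda>x. map (?F x) t') (xs @ ys)) \<in> tests A C"
    using cond_const assms by blast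
  have "mset (concat (map (\<lambda>x. map (?F x) t') (xs @ ys))) =
        mset (concat (map (\<lambda>x. map (?F x) fsel) xs) @
           (concat (map (\<lambda>x. map (?F x) rsel) xs) @ concat (map (\<lambda>x. map (?F x) t') ys)))"
    using mset_split2[OF assms(3), of ?F xs] by simp
  then have "concat (map (\<lambda>x. map (?F x) fsel) xs) @
           (concat (map (\<lambda>x. map (?F x) rsel) xs) @ concat (map (\<lambda>x. map (?F x) t') ys)) \<in> tests A C"
    using tests_perm[OF T] by metis
  then show ?thesis by blast
qed

lemma sum_push: "sum_list (concat (map (\<lambda>x. map (\<lambda>f. sq f x) fs) xs)) = sq (sum_list fs) (sum_list xs)"
  by (induction xs) (auto simp: sq_lsum sq_radd sq_rzero)

lemma refines_iff:
  "refines T0 A B D C \<longleftrightarrow> (\<exists>xs ys. xs @ ys \<in> tests A B \<and> C = sum_list xs \<and> D \<in> set xs)"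
proof
  assume "refines T0 A B D C"
  then obtain t Y0 j where t: "t \<in> tests A B" "Y0 \<subseteq> {..<length t}" "C = (\<Sum>j\<in>Y0. t ! j)"
    "j \<in> Y0" "D = t ! j" unfolding refines_def by blast
  define L where "L = [0..<length t]"
  define xs where "xs = map (nth t) (filter (\<lambda>j. j \<in> Y0) L)"
  define ys where "ys = map (nth t) (filter (\<lambda>j. j \<notin> Y0) L)"
  have "mset (xs @ ys) = image_mset (nth t) (mset (filter (\<lambda>j. j \<in> Y0) L) + mset (filter (\<lambda>j. j \<notin> Y0) L))"
    unfolding xs_def ys_def by (simp del: mset_filter)
  also have "\<dots> = image_mset (nth t) (mset L)"
    by (simp only: mset_filter multiset_partition[symmetric])
  also have "\<dots> = mset t" unfolding L_def by (metis map_nth mset_map)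
  finally have 1: "xs @ ys \<in> tests A B" using tests_perm t(1) by metis
  have "set (filter (\<lambda>j. j \<in> Y0) L) = Y0" using t(2) unfolding L_def by auto
  then have 2: "C = sum_list xs" unfolding xs_def t(3)
    by (metis distinct_filter distinct_upt L_def sum_list_distinct_conv_sum_set)
  have 3: "D \<in> set xs" using t unfolding xs_def L_def by auto
  show "\<exists>xs ys. xs @ ys \<in> tests A B \<and> C = sum_list xs \<and> D \<in> set xs" using 1 2 3 by blast
next
  assume "\<exists>xs ys. xs @ ys \<in> tests A B \<and> C = sum_list xs \<and> D \<in> set xs"
  then obtain xs ys where h: "xs @ ys \<in> tests A B" "C = sum_list xs" "D \<in> set xs" by blast
  then obtain j where j: "j < length xs" "D = xs ! j" by (metis in_set_conv_nth)
  have "C = (\<Sum>i\<in>{..<length xs}. (xs @ ys) ! i)"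
    using h(2) by (simp add: sum_list_sum_nth nth_append atLeast0LessThan)
  then show "refines T0 A B D C" unfolding refines_def
    using h(1) j by (intro bexI[of _ "xs @ ys"] exI[of _ "{..<length xs}"]) (auto simp: nth_append)
qed

lemma tests_nonempty_I: "t \<in> tests II B \<Longrightarrow> t \<noteq> []"
proof
  assume "t \<in> tests II B" "t = []"
  then have "[] \<in> tests II II" using tests_cond[of "[]" II B "\<lambda>_. []" II] by simp
  then show False using test_prob one_ne0 by fastforce
qed

declare comp_assoc[simp] comp_unit_right[simp] comp_unit_left[simp]

lemma par_T': "x \<in> TT A B \<Longrightarrow> y \<in> TT A' B' \<Longrightarrow> A2 = o_comp T0 A A' \<Longrightarrow> B2 = o_comp T0 B B' \<Longrightarrow> pr x y \<in> TT A2 B2"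
  using par_T by blast

lemma state_par: "x \<in> TT II A1 \<Longrightarrow> y \<in> TT II B1 \<Longrightarrow> sq (pr (idd A1) y) x = pr x y"
  using interchange[of x II A1 "idd A1" A1 "one T0" II II y B1] id_T one_T
  by (simp add: pr_one_right seq_id_left sq_one_right)

lemma pr_id_sq: "x \<in> TT A1 A2 \<Longrightarrow> y \<in> TT A2 A3 \<Longrightarrow> pr (idd C) (sq y x) = sq (pr (idd C) y) (pr (idd C) x)"
  using interchange[of "idd C" C C "idd C" C x A1 A2 y A3] id_T seq_id_left[OF id_T, of C] by simp

lemma eff_par_l: "a \<in> TT S1 II \<Longrightarrow> b \<in> TT S2 II \<Longrightarrow> sq a (pr (idd S1) b) = pr a b"
  using interchange[of "idd S1" S1 S1 a II b S2 II "one T0" II] id_T one_T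
  by (simp add: pr_one_right seq_id_right sq_one_left)

lemma eff_par_r: "a \<in> TT S1 II \<Longrightarrow> b \<in> TT S2 II \<Longrightarrow> sq b (pr a (idd S2)) = pr a b"
  using interchange[of a S1 II "one T0" II "idd S2" S2 S2 b II] id_T one_T
  by (simp add: pr_one_left seq_id_right sq_one_left)

lemma pr_eff_assoc: "f \<in> TT C1 II \<Longrightarrow> g \<in> TT D1 II \<Longrightarrow>
   pr (idd A) (pr f g) = sq (pr (idd A) f) (pr (idd (o_comp T0 A C1)) g)"
proof -
  assume f: "f \<in> TT C1 II" and g: "g \<in> TT D1 II"
  have y: "pr (idd A) f \<in> TT (o_comp T0 A C1) A" using par_T'[OF id_T f] by simp
  have "sq (pr (pr (idd A) f) (one T0)) (pr (idd (o_comp T0 A C1)) g) =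
        pr (sq (pr (idd A) f) (idd (o_comp T0 A C1))) (sq (one T0) g)"
    using interchange[OF id_T y g one_T] .
  then show ?thesis using y g by (simp add: pr_one_right seq_id_right sq_one_left par_assoc)
qed

lemma eff_comp: "eff T0 (o_comp T0 A B) = pr (eff T0 A) (eff T0 B)" using causal_par .

lemma tests_par_single_l: "t \<in> tests A B \<Longrightarrow> map (pr (idd C)) t \<in> tests (o_comp T0 C A) (o_comp T0 C B)"
  using tests_par[OF id_test, of t A B] by simp

lemma tests_par_single_r: "t \<in> tests A B \<Longrightarrow> [e] \<in> tests C D \<Longrightarrow> map (\<lambda>x. pr x e) t \<in> tests (o_comp T0 A C) (o_comp T0 B D)"
  using tests_par[of t A B "[e]" C D] by (simp add: map_concat comp_def)

lemma states_T: "states T0 A = TT II A" unfolding states_def ..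
lemma effects_T: "effects T0 A = TT A II" unfolding effects_def ..

lemma scal_pr: "pr (p *\<^sub>R one T0) x = p *\<^sub>R x" by (simp add: pr_lmul pr_one_left)
lemma scal_pr2: "pr x (p *\<^sub>R one T0) = p *\<^sub>R x" by (simp add: pr_rmul pr_one_right)

lemma prod_normalized:
  assumes "x \<in> normalized_states T0 S1" "y \<in> normalized_states T0 S2"
  shows "pr x y \<in> normalized_states T0 (o_comp T0 S1 S2)"
  using assms unfolding normalized_states_def states_T
  by (auto simp: eff_comp interchange[OF _ eff_T _ eff_T] pr_one_left intro: par_T')

lemma push_refines:
  assumes "xs @ ys \<in> tests A B" "D \<in> set xs" "t' \<in> tests B C" "mset t' = mset (fsel @ rsel)" "f \<in> set fsel"
  shows "refines T0 A C (sq f D) (sq (sum_list fsel) (sum_list xs))"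
proof -
  obtain zs where "concat (map (\<lambda>x. map (\<lambda>f. sq f x) fsel) xs) @ zs \<in> tests A C"
    using push[OF assms(1,3,4)] by blast
  moreover have "sq f D \<in> set (concat (map (\<lambda>x. map (\<lambda>f. sq f x) fsel) xs))"
    using assms(2,5) by auto
  ultimately show ?thesis unfolding refines_iff sum_push[symmetric] by blast
qed

lemma atomicD: "atomic T0 A B C \<Longrightarrow> refines T0 A B D C \<Longrightarrow> \<exists>l. 0 \<le> l \<and> l \<le> 1 \<and> D = l *\<^sub>R C"
  unfolding atomic_def by blast

lemma prod_pure:
  assumes N1: "\<Psi> \<in> normalized_states T0 S1" and P1: "pure_state T0 S1 \<Psi>"
    and N2: "\<Gamma> \<in> normalized_states T0 S2" and P2: "pure_state T0 S2 \<Gamma>"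
  shows "pure_state T0 (o_comp T0 S1 S2) (pr \<Psi> \<Gamma>)"
proof -
  have Ps: "\<Psi> \<in> TT II S1" "sq (eff T0 S1) \<Psi> = one T0" using N1 unfolding normalized_states_def states_T by auto
  have Gs: "\<Gamma> \<in> TT II S2" "sq (eff T0 S2) \<Gamma> = one T0" using N2 unfolding normalized_states_def states_T by auto
  have PT: "pr \<Psi> \<Gamma> \<in> TT II (o_comp T0 S1 S2)" using par_T'[OF Ps(1) Gs(1)] by simp
  show ?thesis unfolding pure_state_def atomic_def
  proof (intro conjI allI impI PT)
    fix D assume "refines T0 II (o_comp T0 S1 S2) D (pr \<Psi> \<Gamma>)"
    then obtain xs ys where R: "xs @ ys \<in> tests II (o_comp T0 S1 S2)" "pr \<Psi> \<Gamma> = sum_list xs" "D \<in> set xs"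
      unfolding refines_iff by blast
    have DT: "D \<in> TT II (o_comp T0 S1 S2)" using tests_T R by fastforce
    have t1: "[pr (eff T0 S1) (idd S2)] \<in> tests (o_comp T0 S1 S2) S2"
      using tests_par[OF eff_test[of S1] id_test[of S2]] by simp
    have "refines T0 II S2 (sq (pr (eff T0 S1) (idd S2)) D) (sq (sum_list [pr (eff T0 S1) (idd S2)]) (sum_list xs))"
      by (rule push_refines[OF R(1) R(3) t1, of _ "[]"]) auto
    moreover have "sq (sum_list [pr (eff T0 S1) (idd S2)]) (sum_list xs) = \<Gamma>"
      using R(2)[symmetric] interchange[OF Ps(1) eff_T Gs(1) id_T] Ps Gs
      by (simp add: pr_one_left seq_id_left)
    ultimately obtain \<mu> where mu: "0 \<le> \<mu>" "\<mu> \<le> 1" "sq (pr (eff T0 S1) (idd S2)) D = \<mu> *\<^sub>R \<Gamma>"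
      using P2 unfolding pure_state_def using atomicD by metis
    have key: "sq (pr a b) D = sq (pr a b) (pr \<Psi> (\<mu> *\<^sub>R \<Gamma>))" if a: "a \<in> TT S1 II" and b: "b \<in> TT S2 II" for a b
    proof -
      obtain tb where tb: "tb \<in> tests S2 II" "b \<in> set tb" using T_in_test[OF b] by blast
      have tb_sum: "sum_list tb = eff T0 S2" using sum_test_eff tb by fastforce
      have t2: "map (pr (idd S1)) tb \<in> tests (o_comp T0 S1 S2) S1"
        using tests_par_single_l[OF tb(1), of S1] by simp
      have "refines T0 II S1 (sq (pr (idd S1) b) D) (sq (sum_list (map (pr (idd S1)) tb)) (sum_list xs))"
        by (rule push_refines[OF R(1) R(3) t2, of _ "[]"]) (use tb in auto)
      moreover have "sq (sum_list (map (pr (idd S1)) tb)) (sum_list xs) = \<Psi>"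
        using R(2)[symmetric] interchange[OF Ps(1) id_T Gs(1) eff_T] Ps Gs tb_sum
        by (simp add: pr_one_right seq_id_left pr_rsum[symmetric])
      ultimately obtain l where l: "sq (pr (idd S1) b) D = l *\<^sub>R \<Psi>"
        using P1 unfolding pure_state_def using atomicD by metis
      obtain p where p: "sq a \<Psi> = p *\<^sub>R one T0" using scalar seq_T[OF Ps(1) a] by blast
      have ab: "pr a b = sq a (pr (idd S1) b)" using eff_par_l a b by simp
      have eb: "pr (eff T0 S1) b = sq b (pr (eff T0 S1) (idd S2))" using eff_par_r[OF eff_T[of S1] b] by simp
      have "l *\<^sub>R one T0 = sq (eff T0 S1) (sq (pr (idd S1) b) D)" using l Ps by (simp add: sq_rmul)
      also have "\<dots> = sq (pr (eff T0 S1) b) D" using eff_par_l[OF eff_T b] by (simp add: seq_assoc)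
      also have "\<dots> = \<mu> *\<^sub>R sq b \<Gamma>" using eb mu(3) by (simp add: seq_assoc[symmetric] sq_rmul)
      finally have lm: "l *\<^sub>R one T0 = \<mu> *\<^sub>R sq b \<Gamma>" .
      have "sq (pr a b) D = l *\<^sub>R (p *\<^sub>R one T0)" using ab l p by (simp add: seq_assoc[symmetric] sq_rmul)
      also have "\<dots> = p *\<^sub>R \<mu> *\<^sub>R sq b \<Gamma>" using lm by (metis scaleR_left_commute)
      also have "\<dots> = sq (pr a b) (pr \<Psi> (\<mu> *\<^sub>R \<Gamma>))"
        using interchange[OF Ps(1) a Gs(1) b] p by (simp add: pr_rmul sq_rmul scal_pr)
      finally show ?thesis .
    qed
    have MT: "pr \<Psi> (\<mu> *\<^sub>R \<Gamma>) \<in> TT II (o_comp T0 S1 S2)"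
    proof -
      have "pr (eff T0 S1) (idd S2) \<in> TT (o_comp T0 S1 S2) S2" using par_T'[OF eff_T id_T] by simp
      then have "\<mu> *\<^sub>R \<Gamma> \<in> TT II S2" using seq_T[OF DT] mu(3) by metis
      then show ?thesis using par_T'[OF Ps(1)] by simp
    qed
    have "D = pr \<Psi> (\<mu> *\<^sub>R \<Gamma>)"
      using local_discr[of D S1 S2 "pr \<Psi> (\<mu> *\<^sub>R \<Gamma>)"] DT MT key unfolding states_T effects_T by blast
    then show "\<exists>l. 0 \<le> l \<and> l \<le> 1 \<and> D = l *\<^sub>R pr \<Psi> \<Gamma>" using mu by (auto simp: pr_rmul)
  qed
qed

lemma mset_rem: "x \<in> set t \<Longrightarrow> mset t = mset ([x] @ remove1 x t)"
  by (simp add: mset_remove1 insert_DiffM)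

lemma rev_pure:
  assumes N: "P \<in> normalized_states T0 (o_comp T0 A0 R)" and Pp: "pure_state T0 (o_comp T0 A0 R) P"
    and V: "reversible T0 R R' V"
  shows "pure_state T0 (o_comp T0 A0 R') (sq (pr (idd A0) V) P)"
    "sq (pr (idd A0) V) P \<in> normalized_states T0 (o_comp T0 A0 R')"
    "marginal T0 A0 R' (sq (pr (idd A0) V) P) = marginal T0 A0 R P"
proof -
  obtain W where VT: "V \<in> TT R R'" "sq (eff T0 R') V = eff T0 R" and WT: "W \<in> TT R' R"
    and WV: "sq W V = idd R" "sq V W = idd R'"
    using V unfolding reversible_def channel_def by blast
  have PT: "P \<in> TT II (o_comp T0 A0 R)" "sq (eff T0 (o_comp T0 A0 R)) P = one T0"
    using N unfolding normalized_states_def states_T by auto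
  have iV: "pr (idd A0) V \<in> TT (o_comp T0 A0 R) (o_comp T0 A0 R')" using par_T[OF id_T VT(1)] .
  have iW: "pr (idd A0) W \<in> TT (o_comp T0 A0 R') (o_comp T0 A0 R)" using par_T[OF id_T WT] .
  define Q where "Q = sq (pr (idd A0) V) P"
  have QT: "Q \<in> TT II (o_comp T0 A0 R')" unfolding Q_def using seq_T[OF PT(1) iV] .
  have "sq (eff T0 (o_comp T0 A0 R')) Q = sq (pr (sq (eff T0 A0) (idd A0)) (sq (eff T0 R') V)) P"
    unfolding Q_def eff_comp seq_assoc using interchange[OF id_T eff_T VT(1) eff_T] by simp
  also have "\<dots> = one T0" using PT VT seq_id_right[OF eff_T[of A0]] by (simp add: eff_comp)
  finally show "Q \<in> normalized_states T0 (o_comp T0 A0 R')" unfolding normalized_states_def states_T using QT by simp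
  have "marginal T0 A0 R' Q = sq (pr (sq (idd A0) (idd A0)) (sq (eff T0 R') V)) P"
    unfolding Q_def marginal_def seq_assoc using interchange[OF id_T id_T VT(1) eff_T] by simp
  also have "\<dots> = marginal T0 A0 R P" unfolding marginal_def using VT seq_id_left[OF id_T] by simp
  finally show "marginal T0 A0 R' Q = marginal T0 A0 R P" .
  have WVP: "sq (pr (idd A0) W) Q = P"
    unfolding Q_def seq_assoc using interchange[OF id_T id_T VT(1) WT] WV par_id seq_id_left[OF id_T, of A0]
      seq_id_left[OF PT(1)] by simp
  have VW: "sq (pr (idd A0) V) (pr (idd A0) W) = idd (o_comp T0 A0 R')"
    using interchange[OF id_T id_T WT VT(1)] WV par_id seq_id_left[OF id_T, of A0] by simp
  show "pure_state T0 (o_comp T0 A0 R') Q" unfolding pure_state_def atomic_def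
  proof (intro conjI allI impI QT)
    fix D assume "refines T0 II (o_comp T0 A0 R') D Q"
    then obtain xs ys where R: "xs @ ys \<in> tests II (o_comp T0 A0 R')" "Q = sum_list xs" "D \<in> set xs"
      unfolding refines_iff by blast
    have DT: "D \<in> TT II (o_comp T0 A0 R')" using tests_T R by fastforce
    obtain tf where tf: "tf \<in> tests (o_comp T0 A0 R') (o_comp T0 A0 R)" "pr (idd A0) W \<in> set tf"
      using T_in_test[OF iW] by blast
    have "refines T0 II (o_comp T0 A0 R) (sq (pr (idd A0) W) D) (sq (sum_list [pr (idd A0) W]) (sum_list xs))"
      by (rule push_refines[OF R(1) R(3) tf(1) mset_rem[OF tf(2)]]) simp
    then have "refines T0 II (o_comp T0 A0 R) (sq (pr (idd A0) W) D) P" using WVP R(2) by simp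
    then obtain l where l: "0 \<le> l" "l \<le> 1" "sq (pr (idd A0) W) D = l *\<^sub>R P"
      using Pp unfolding pure_state_def using atomicD by metis
    have "D = sq (pr (idd A0) V) (sq (pr (idd A0) W) D)"
      using VW seq_id_left[OF DT] by (simp add: seq_assoc)
    also have "\<dots> = l *\<^sub>R Q" unfolding l(3) Q_def by (simp add: sq_rmul)
    finally show "\<exists>l. 0 \<le> l \<and> l \<le> 1 \<and> D = l *\<^sub>R Q" using l by blast
  qed
qed

end

context opt begin
lemma mset_pairs: "mset (concat (map (\<lambda>x. [f x, g x]) L)) = mset (map g L @ map f L)"
  by (induction L) auto

lemma normD: "x \<in> normalized_states T0 A \<Longrightarrow> x \<in> TT II A \<and> sq (eff T0 A) x = one T0"
  unfolding normalized_states_def states_T by auto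

lemma dist_states:
  "n \<ge> 1 \<Longrightarrow> \<exists>C \<alpha> ts. ts \<in> tests C II \<and> length ts = n \<and> (\<forall>i<n. \<alpha> i \<in> normalized_states T0 C) \<and>
     (\<forall>i<n. \<forall>j<n. sq (ts!j) (\<alpha> i) = (if i = j then one T0 else 0))"
proof (induction n)
  case 0 then show ?case by simp
next
  case (Suc n)
  obtain C0 \<rho>0 \<rho>1 a0 a1 where D: "\<rho>0 \<in> normalized_states T0 C0" "\<rho>1 \<in> normalized_states T0 C0"
    "[a0, a1] \<in> tests C0 II" "sq a0 \<rho>0 = one T0" "sq a1 \<rho>1 = one T0" "sq a0 \<rho>1 = 0" "sq a1 \<rho>0 = 0"
    using distinguishable by blast
  have aT: "a0 \<in> TT C0 II" "a1 \<in> TT C0 II" using tests_T[OF D(3)] by auto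
  have rT: "\<rho>0 \<in> TT II C0" "\<rho>1 \<in> TT II C0" using normD[OF D(1)] normD[OF D(2)] by blast+
  show ?case
  proof (cases "n = 0")
    case True
    have "[eff T0 C0] \<in> tests C0 II \<and> length [eff T0 C0] = Suc n \<and> (\<forall>i<Suc n. (\<lambda>_. \<rho>0) i \<in> normalized_states T0 C0) \<and>
     (\<forall>i<Suc n. \<forall>j<Suc n. sq ([eff T0 C0]!j) ((\<lambda>_. \<rho>0) i) = (if i = j then one T0 else 0))"
      using True eff_test D normD by auto
    then show ?thesis by (intro exI[of _ C0] exI[of _ "\<lambda>_. \<rho>0"] exI[of _ "[eff T0 C0]"])
  next
    case False
    then obtain C \<alpha> ts where IH: "ts \<in> tests C II" "length ts = n" "\<forall>i<n. \<alpha> i \<in> normalized_states T0 C"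
      "\<forall>i<n. \<forall>j<n. sq (ts!j) (\<alpha> i) = (if i = j then one T0 else 0)" using Suc by auto
    have atT: "\<And>j. j < n \<Longrightarrow> ts!j \<in> TT C II" using tests_T[OF IH(1)] IH(2) nth_mem by blast
    have alT: "\<And>i. i < n \<Longrightarrow> \<alpha> i \<in> TT II C" "\<And>i. i < n \<Longrightarrow> sq (eff T0 C) (\<alpha> i) = one T0"
      using IH(3) normD by blast+
    have ne: "ts \<noteq> []" using IH(2) False by (metis list.size(3))
    define \<alpha>' where "\<alpha>' i = (if i < n then pr (\<alpha> i) \<rho>0 else pr (\<alpha> 0) \<rho>1)" for i
    define ts2 where "ts2 = map (\<lambda>a. pr a a0) ts @ [pr (eff T0 C) a1]"
    have T: "concat (map (\<lambda>x. [pr x a0, pr x a1]) ts) \<in> tests (o_comp T0 C C0) II"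
      using tests_par[OF IH(1) D(3)] by simp
    have "map (\<lambda>x. pr x a1) ts @ map (\<lambda>x. pr x a0) ts \<in> tests (o_comp T0 C C0) II"
      by (rule tests_perm[OF T]) (simp add: mset_pairs)
    then have "sum_list (map (\<lambda>x. pr x a1) ts) # map (\<lambda>x. pr x a0) ts \<in> tests (o_comp T0 C C0) II"
      using prefix_sum ne by simp
    moreover have "sum_list (map (\<lambda>x. pr x a1) ts) = pr (eff T0 C) a1"
      using sum_test_eff[OF IH(1) ne] by (simp add: pr_lsum[symmetric])
    ultimately have T0': "pr (eff T0 C) a1 # map (\<lambda>x. pr x a0) ts \<in> tests (o_comp T0 C C0) II" by simp
    have T': "ts2 \<in> tests (o_comp T0 C C0) II"
      unfolding ts2_def by (rule tests_perm[OF T0']) simp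
    have N: "\<forall>i<Suc n. \<alpha>' i \<in> normalized_states T0 (o_comp T0 C C0)"
      unfolding \<alpha>'_def using IH(3) D(1,2) prod_normalized False by auto
    have pp: "\<And>a b x y S. a \<in> TT S II \<Longrightarrow> x \<in> TT II S \<Longrightarrow> b \<in> TT C0 II \<Longrightarrow> y \<in> TT II C0 \<Longrightarrow>
        sq (pr a b) (pr x y) = pr (sq a x) (sq b y)"
    proof -
      fix a b x y S assume "a \<in> TT S II" "x \<in> TT II S" "b \<in> TT C0 II" "y \<in> TT II C0"
      then show "sq (pr a b) (pr x y) = pr (sq a x) (sq b y)"
        using interchange[of x II S a II y II C0 b II] by blast
    qed
    have del: "\<forall>i<Suc n. \<forall>j<Suc n. sq (ts2!j) (\<alpha>' i) = (if i = j then one T0 else 0)"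
    proof (intro allI impI)
      fix i j assume ij: "i < Suc n" "j < Suc n"
      show "sq (ts2!j) (\<alpha>' i) = (if i = j then one T0 else 0)"
      proof (cases "j < n")
        case True
        then have "ts2!j = pr (ts!j) a0" unfolding ts2_def using IH(2) by (simp add: nth_append)
        show ?thesis
        proof (cases "i < n")
          case True
          then have "sq (ts2!j) (\<alpha>' i) = pr (sq (ts!j) (\<alpha> i)) (sq a0 \<rho>0)"
            unfolding \<alpha>'_def \<open>ts2!j = _\<close> using pp[OF atT alT(1) aT(1) rT(1)] \<open>j < n\<close> by simp
          then show ?thesis using IH(4) True \<open>j < n\<close> D(4) by (simp add: pr_one_right pr_lzero)
        next
          case False
          then have "sq (ts2!j) (\<alpha>' i) = pr (sq (ts!j) (\<alpha> 0)) (sq a0 \<rho>1)"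
            unfolding \<alpha>'_def \<open>ts2!j = _\<close> using pp[OF atT alT(1) aT(1) rT(2)] \<open>j < n\<close> \<open>n \<noteq> 0\<close> by simp
          then show ?thesis using False \<open>j < n\<close> D(6) by (simp add: pr_rzero)
        qed
      next
        case False
        then have "ts2!j = pr (eff T0 C) a1" "j = n" unfolding ts2_def using IH(2) ij by (auto simp: nth_append)
        show ?thesis
        proof (cases "i < n")
          case True
          then have "sq (ts2!j) (\<alpha>' i) = pr (sq (eff T0 C) (\<alpha> i)) (sq a1 \<rho>0)"
            unfolding \<alpha>'_def \<open>ts2!j = _\<close> using pp[OF eff_T alT(1) aT(2) rT(1)] by simp
          then show ?thesis using True \<open>j = n\<close> D(7) by (simp add: pr_rzero)
        next
          case False
          then have "i = n" using ij by simp
          have "sq (ts2!j) (\<alpha>' i) = pr (sq (eff T0 C) (\<alpha> 0)) (sq a1 \<rho>1)"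
            unfolding \<alpha>'_def \<open>ts2!j = _\<close> using pp[OF eff_T alT(1) aT(2) rT(2)] False \<open>n \<noteq> 0\<close> by simp
          then show ?thesis using alT(2) \<open>n \<noteq> 0\<close> \<open>i = n\<close> \<open>j = n\<close> D(5) by (simp add: pr_one_right)
        qed
      qed
    qed
    have "length ts2 = Suc n" unfolding ts2_def using IH(2) by simp
    then show ?thesis using T' N del by (intro exI[of _ "o_comp T0 C C0"] exI[of _ \<alpha>'] exI[of _ ts2]) simp
  qed
qed

end

context opt_purif begin

lemma main:
  assumes rt: "\<rho>s \<in> tests II A" and pur: "purification T0 A B (sum_list \<rho>s) \<Psi>"
  shows "(\<exists>b \<in> o_tests T0 B (o_I T0). length b = length \<rho>s \<and>
            (\<forall>i < length \<rho>s. \<rho>s ! i = o_seq T0 (o_par T0 (o_id T0 A) (b ! i)) \<Psi>))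
       \<and> (\<exists>B' \<Psi>'. purification T0 A B' (sum_list \<rho>s) \<Psi>' \<and>
            (\<exists>b \<in> o_tests T0 B' (o_I T0). length b = length \<rho>s \<and>
               (\<forall>i < length \<rho>s. \<rho>s ! i = o_seq T0 (o_par T0 (o_id T0 A) (b ! i)) \<Psi>') \<and>
               (\<exists>\<sigma>. (\<forall>i < length \<rho>s. \<sigma> i \<in> normalized_states T0 B') \<and>
                  (\<forall>i < length \<rho>s. \<forall>j < length \<rho>s.
                     o_seq T0 (b ! j) (\<sigma> i) = (if i = j then one T0 else 0)))))"
proof -
  define n where "n = length \<rho>s"
  define \<rho> where "\<rho> = sum_list \<rho>s"
  have ne: "\<rho>s \<noteq> []" using tests_nonempty_I[OF rt] .
  then have n1: "n \<ge> 1" unfolding n_def by (cases \<rho>s) auto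
  have rT: "\<And>i. i < n \<Longrightarrow> \<rho>s!i \<in> TT II A" using tests_T[OF rt] nth_mem unfolding n_def by blast
  have rho_sum: "\<rho> = sum_list (map (\<lambda>i. \<rho>s!i) [0..<n])" unfolding \<rho>_def n_def by (simp add: map_nth)
  have PsN: "\<Psi> \<in> TT II (o_comp T0 A B)" "sq (eff T0 (o_comp T0 A B)) \<Psi> = one T0"
    using pur unfolding purification_def using normD by blast+
  have PsP: "pure_state T0 (o_comp T0 A B) \<Psi>" "sq (pr (idd A) (eff T0 B)) \<Psi> = \<rho>"
    using pur unfolding purification_def marginal_def \<rho>_def by blast+
  have erho: "sq (eff T0 A) \<rho> = one T0"
    using PsP(2)[symmetric] PsN(2) eff_par_l[OF eff_T eff_T] by (simp add: seq_assoc eff_comp)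
  obtain C \<alpha> ts where D: "ts \<in> tests C II" "length ts = n" "\<forall>i<n. \<alpha> i \<in> normalized_states T0 C"
      "\<forall>i<n. \<forall>j<n. sq (ts!j) (\<alpha> i) = (if i = j then one T0 else 0)"
    using dist_states[OF n1] by blast
  have aT: "\<And>i. i < n \<Longrightarrow> \<alpha> i \<in> TT II C" "\<And>i. i < n \<Longrightarrow> sq (eff T0 C) (\<alpha> i) = one T0"
    using D(3) normD by blast+
  have tsT: "\<And>j. j < n \<Longrightarrow> ts!j \<in> TT C II" using tests_T[OF D(1)] D(2) nth_mem by blast
  have "\<forall>i\<in>{..<n}. \<exists>t. t \<in> tests II C \<and> \<alpha> i \<in> set t" using T_in_test aT(1) by blast
  from bchoice[OF this] obtain t\<alpha> where t\<alpha>: "\<And>i. i < n \<Longrightarrow> t\<alpha> i \<in> tests II C \<and> \<alpha> i \<in> set (t\<alpha> i)" by blast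
  define \<Sigma> where "\<Sigma> = sum_list (map (\<lambda>i. pr (\<rho>s!i) (\<alpha> i)) [0..<n])"
  have "concat (map (\<lambda>i. map (\<lambda>y. sq y (\<rho>s!i)) [pr (idd A) (\<alpha> i)]) [0..<length \<rho>s]) @
        concat (map (\<lambda>i. map (\<lambda>y. sq y (\<rho>s!i)) (map (pr (idd A)) (remove1 (\<alpha> i) (t\<alpha> i)))) [0..<length \<rho>s])
        \<in> tests II (o_comp T0 A C)"
  proof (rule cond_sel[OF rt], intro allI impI conjI)
    fix i assume i: "i < length \<rho>s"
    show "map (pr (idd A)) (t\<alpha> i) \<in> tests A (o_comp T0 A C)"
      using tests_par_single_l[of "t\<alpha> i" II C A] t\<alpha> i unfolding n_def by simp
    show "mset (map (pr (idd A)) (t\<alpha> i)) = mset ([pr (idd A) (\<alpha> i)] @ map (pr (idd A)) (remove1 (\<alpha> i) (t\<alpha> i)))"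
      using mset_rem[of "\<alpha> i" "t\<alpha> i"] t\<alpha> i unfolding n_def by (metis map_append mset_map list.simps(8,9))
  qed
  moreover have "concat (map (\<lambda>i. map (\<lambda>y. sq y (\<rho>s!i)) [pr (idd A) (\<alpha> i)]) [0..<length \<rho>s]) =
     map (\<lambda>i. pr (\<rho>s!i) (\<alpha> i)) [0..<n]"
    unfolding n_def using state_par[OF rT aT(1)] unfolding n_def by (auto simp: map_concat)
  ultimately have SigT: "\<Sigma> \<in> TT II (o_comp T0 A C)" unfolding \<Sigma>_def using prefix_sum_T n1 by fastforce
  have Sig_eff: "sq (pr (idd A) f) \<Sigma> = sum_list (map (\<lambda>i. pr (\<rho>s!i) (sq f (\<alpha> i))) [0..<n])"
    if f: "f \<in> TT C II" for f
    unfolding \<Sigma>_def sq_rsum map_map comp_def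
    using interchange[OF rT id_T aT(1) f] seq_id_left[OF rT] by (intro arg_cong[where f=sum_list] map_cong) auto
  have Sig_marg: "sq (pr (idd A) (eff T0 C)) \<Sigma> = \<rho>"
  proof -
    have "map (\<lambda>i. pr (\<rho>s!i) (sq (eff T0 C) (\<alpha> i))) [0..<n] = map (nth \<rho>s) [0..<n]"
      by (rule map_cong) (auto simp: aT(2) pr_one_right)
    then show ?thesis unfolding Sig_eff[OF eff_T] rho_sum by (rule arg_cong)
  qed
  have Sig_j: "sq (pr (idd A) (ts!j)) \<Sigma> = \<rho>s!j" if j: "j < n" for j
  proof -
    have m: "map (\<lambda>i. pr (\<rho>s!i) (sq (ts!j) (\<alpha> i))) [0..<n] = map (\<lambda>i. if i = j then \<rho>s!i else 0) [0..<n]"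
    proof (rule map_cong)
      fix i assume "i \<in> set [0..<n]"
      then have "i < n" by simp
      then show "pr (\<rho>s!i) (sq (ts!j) (\<alpha> i)) = (if i = j then \<rho>s!i else 0)"
        using D(4) j by (simp add: pr_one_right pr_rzero)
    qed simp
    show ?thesis unfolding Sig_eff[OF tsT[OF j]] m using j by (simp add: sum_list_distinct_conv_sum_set)
  qed
  have SigN: "\<Sigma> \<in> normalized_states T0 (o_comp T0 A C)"
  proof -
    have "sq (eff T0 (o_comp T0 A C)) \<Sigma> = sq (eff T0 A) (sq (pr (idd A) (eff T0 C)) \<Sigma>)"
      using eff_par_l[OF eff_T eff_T] by (simp add: seq_assoc eff_comp)
    then show ?thesis unfolding normalized_states_def states_T using Sig_marg erho SigT by simp
  qed
  obtain Dd \<Gamma> where Gp: "purification T0 (o_comp T0 A C) Dd \<Sigma> \<Gamma>" using purif_exists[OF SigN] by blast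
  define X where "X = o_comp T0 C Dd"
  have GN: "\<Gamma> \<in> normalized_states T0 (o_comp T0 A X)" "pure_state T0 (o_comp T0 A X) \<Gamma>"
    using Gp unfolding purification_def X_def by simp_all
  have GT: "\<Gamma> \<in> TT II (o_comp T0 A X)" "sq (eff T0 (o_comp T0 A X)) \<Gamma> = one T0" using normD[OF GN(1)] by auto
  have Gm: "sq (pr (idd (o_comp T0 A C)) (eff T0 Dd)) \<Gamma> = \<Sigma>"
    using Gp unfolding purification_def marginal_def by blast
  have G_eff: "sq (pr (idd A) (pr f (eff T0 Dd))) \<Gamma> = sq (pr (idd A) f) \<Sigma>" if f: "f \<in> TT C II" for f
    using pr_eff_assoc[OF f eff_T, of A] Gm by (simp add: seq_assoc[symmetric])
  have G_marg: "sq (pr (idd A) (eff T0 X)) \<Gamma> = \<rho>"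
    unfolding X_def eff_comp using G_eff[OF eff_T] Sig_marg by simp
  have GP: "purification T0 A X \<rho> \<Gamma>" unfolding purification_def marginal_def using GN G_marg by simp
  define b2 where "b2 = map (\<lambda>a. pr a (eff T0 Dd)) ts"
  have b2T: "b2 \<in> tests X II" unfolding b2_def X_def using tests_par_single_r[OF D(1) eff_test] by simp
  have b2n: "length b2 = n" "\<And>j. j < n \<Longrightarrow> b2!j = pr (ts!j) (eff T0 Dd)" unfolding b2_def using D(2) by auto
  have G_j: "\<And>j. j < n \<Longrightarrow> sq (pr (idd A) (b2!j)) \<Gamma> = \<rho>s!j" using b2n G_eff tsT Sig_j by simp
  define \<delta> where "\<delta> = sq (pr (eff T0 (o_comp T0 A C)) (idd Dd)) \<Gamma>"
  have \<delta>N: "\<delta> \<in> normalized_states T0 Dd"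
  proof -
    have "pr (eff T0 (o_comp T0 A C)) (idd Dd) \<in> TT (o_comp T0 A X) Dd"
      using par_T[OF eff_T[of "o_comp T0 A C"] id_T[of Dd]] unfolding X_def by simp
    then have "\<delta> \<in> TT II Dd" unfolding \<delta>_def using seq_T[OF GT(1)] by blast
    moreover have "sq (eff T0 Dd) \<delta> = one T0" unfolding \<delta>_def seq_assoc
      using eff_par_r[OF eff_T[of "o_comp T0 A C"] eff_T[of Dd]] GT(2) unfolding X_def by (simp add: eff_comp par_assoc)
    ultimately show ?thesis unfolding normalized_states_def states_T by simp
  qed
  define \<sigma> where "\<sigma> i = pr (\<alpha> i) \<delta>" for i
  have part2: "\<exists>B' \<Psi>'. purification T0 A B' \<rho> \<Psi>' \<and>
            (\<exists>b \<in> o_tests T0 B' (o_I T0). length b = n \<and>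
               (\<forall>i < n. \<rho>s ! i = o_seq T0 (o_par T0 (o_id T0 A) (b ! i)) \<Psi>') \<and>
               (\<exists>\<sigma>. (\<forall>i < n. \<sigma> i \<in> normalized_states T0 B') \<and>
                  (\<forall>i < n. \<forall>j < n. o_seq T0 (b ! j) (\<sigma> i) = (if i = j then one T0 else 0))))"
  proof -
    have b2j: "\<forall>i<n. \<rho>s!i = sq (pr (idd A) (b2!i)) \<Gamma>" using G_j by simp
    have sN: "\<forall>i<n. \<sigma> i \<in> normalized_states T0 X" unfolding \<sigma>_def X_def using prod_normalized D(3) \<delta>N by blast
    have sd: "\<forall>i<n. \<forall>j<n. sq (b2!j) (\<sigma> i) = (if i = j then one T0 else 0)"
    proof (intro allI impI)
      fix i j assume i: "i < n" and j: "j < n"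
      have "sq (b2!j) (\<sigma> i) = pr (sq (ts!j) (\<alpha> i)) (sq (eff T0 Dd) \<delta>)"
        unfolding \<sigma>_def b2n(2)[OF j] using interchange[OF aT(1)[OF i] tsT[OF j] _ eff_T] normD[OF \<delta>N] by blast
      then show "sq (b2!j) (\<sigma> i) = (if i = j then one T0 else 0)"
        using normD[OF \<delta>N] D(4) i j by (simp add: pr_one_right pr_lzero)
    qed
    show ?thesis
      apply (rule exI[of _ X], rule exI[of _ \<Gamma>], rule conjI[OF GP], rule bexI[OF _ b2T])
      using b2n(1) b2j sN sd by (intro conjI exI[of _ \<sigma>]) auto
  qed
  have part1: "\<exists>b \<in> o_tests T0 B (o_I T0). length b = n \<and>
            (\<forall>i < n. \<rho>s ! i = o_seq T0 (o_par T0 (o_id T0 A) (b ! i)) \<Psi>)"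
  proof -
    obtain sw where swr: "\<And>A B. reversible T0 (o_comp T0 A B) (o_comp T0 B A) (sw A B)" using swap by blast
    have PsNorm: "\<Psi> \<in> normalized_states T0 (o_comp T0 A B)" using pur unfolding purification_def by blast
    define \<Psi>s where "\<Psi>s = sq (sw A B) \<Psi>"
    have PsS: "pure_state T0 (o_comp T0 B A) \<Psi>s" "\<Psi>s \<in> normalized_states T0 (o_comp T0 B A)"
      using rev_pure[of \<Psi> II "o_comp T0 A B" "o_comp T0 B A" "sw A B", simplified par_unit_left comp_unit_left]
        PsNorm PsP(1) swr unfolding \<Psi>s_def by auto
    have PsST: "\<Psi>s \<in> TT II (o_comp T0 B A)" "sq (eff T0 (o_comp T0 B A)) \<Psi>s = one T0" using normD[OF PsS(2)] by auto
    define R where "R = o_comp T0 (o_comp T0 B A) X"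
    define R' where "R' = o_comp T0 X (o_comp T0 B A)"
    define P1 where "P1 = pr \<Psi> \<Gamma>"
    have P1N: "P1 \<in> normalized_states T0 (o_comp T0 A R)" "pure_state T0 (o_comp T0 A R) P1"
      using prod_normalized[OF PsNorm GN(1)] prod_pure[OF PsNorm PsP(1) GN(1) GN(2)]
      unfolding P1_def R_def by simp_all
    define V1 where "V1 = sw (o_comp T0 B A) X"
    have V1r: "reversible T0 R R' V1" unfolding V1_def R_def R'_def using swr .
    define Q1 where "Q1 = sq (pr (idd A) V1) P1"
    have Q1N: "pure_state T0 (o_comp T0 A R') Q1" "Q1 \<in> normalized_states T0 (o_comp T0 A R')"
        "marginal T0 A R' Q1 = marginal T0 A R P1"
      using rev_pure[OF P1N(1) P1N(2) V1r] unfolding Q1_def by auto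
    have effR: "eff T0 R = pr (eff T0 B) (eff T0 (o_comp T0 A X))" unfolding R_def by (simp add: eff_comp)
    have iAeB: "pr (idd A) (eff T0 B) \<in> TT (o_comp T0 A B) A" using par_T[OF id_T eff_T, of A B] by simp
    have "marginal T0 A R P1 = pr (sq (pr (idd A) (eff T0 B)) \<Psi>) (sq (eff T0 (o_comp T0 A X)) \<Gamma>)"
      unfolding marginal_def P1_def effR par_assoc[symmetric] using interchange[OF PsN(1) iAeB GT(1) eff_T] .
    then have m1: "marginal T0 A R' Q1 = \<rho>" using Q1N(3) PsP(2) GT(2) by (simp add: pr_one_right)
    define Q2 where "Q2 = pr \<Gamma> \<Psi>s"
    have Q2N: "Q2 \<in> normalized_states T0 (o_comp T0 A R')" "pure_state T0 (o_comp T0 A R') Q2"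
      using prod_normalized[OF GN(1) PsS(2)] prod_pure[OF GN(1) GN(2) PsS(2) PsS(1)]
      unfolding Q2_def R'_def by simp_all
    have effR': "eff T0 R' = pr (eff T0 X) (eff T0 (o_comp T0 B A))" unfolding R'_def by (simp add: eff_comp)
    have iAeX: "pr (idd A) (eff T0 X) \<in> TT (o_comp T0 A X) A" using par_T[OF id_T eff_T, of A X] by simp
    have "marginal T0 A R' Q2 = pr (sq (pr (idd A) (eff T0 X)) \<Gamma>) (sq (eff T0 (o_comp T0 B A)) \<Psi>s)"
      unfolding marginal_def Q2_def effR' par_assoc[symmetric] using interchange[OF GT(1) iAeX PsST(1) eff_T] .
    then have m2: "marginal T0 A R' Q2 = \<rho>" using G_marg PsST(2) by (simp add: pr_one_right)
    have "purification T0 A R' \<rho> Q1" "purification T0 A R' \<rho> Q2"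
      unfolding purification_def using Q1N m1 Q2N m2 by auto
    from purif_unique[OF this] obtain U where U: "U \<in> revgroup T0 R'" "Q2 = sq (pr (idd A) U) Q1" by blast
    have UT: "U \<in> TT R' R'" "sq (eff T0 R') U = eff T0 R'"
      using U(1) unfolding revgroup_def reversible_def channel_def by auto
    have V1T: "V1 \<in> TT R R'" "sq (eff T0 R') V1 = eff T0 R"
      using V1r unfolding reversible_def channel_def by auto
    define K where "K = sq U V1"
    have KT: "K \<in> TT R R'" unfolding K_def using seq_T[OF V1T(1) UT(1)] .
    define G1 where "G1 = pr (idd B) \<Gamma>"
    have G1T: "G1 \<in> TT B R" unfolding G1_def R_def using par_T[OF id_T[of B] GT(1)] by simp
    define m where "m = sq K G1"
    have mT: "m \<in> TT B R'" unfolding m_def using seq_T[OF G1T KT] .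
    have chain: "sq (pr (idd A) m) \<Psi> = Q2"
    proof -
      have "pr (idd A) G1 = pr (idd (o_comp T0 A B)) \<Gamma>" unfolding G1_def par_assoc[symmetric] par_id ..
      then have "sq (pr (idd A) G1) \<Psi> = P1" unfolding P1_def using state_par[OF PsN(1) GT(1)] by simp
      moreover have "pr (idd A) m = sq (sq (pr (idd A) U) (pr (idd A) V1)) (pr (idd A) G1)"
        unfolding m_def using pr_id_sq[OF G1T KT, of A] pr_id_sq[OF V1T(1) UT(1), of A] unfolding K_def by simp
      ultimately show ?thesis unfolding U(2) Q1_def by (metis seq_assoc)
    qed
    have hh: "sq (pr (idd A) (sq (pr h (eff T0 (o_comp T0 B A))) m)) \<Psi> = sq (pr (idd A) h) \<Gamma>" if h: "h \<in> TT X II" for h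
    proof -
      have gT: "pr h (eff T0 (o_comp T0 B A)) \<in> TT R' II" unfolding R'_def using par_T[OF h eff_T] by simp
      have iAh: "pr (idd A) h \<in> TT (o_comp T0 A X) A" using par_T[OF id_T h, of A] by simp
      have "sq (pr (idd A) (sq (pr h (eff T0 (o_comp T0 B A))) m)) \<Psi> = sq (pr (idd A) (pr h (eff T0 (o_comp T0 B A)))) Q2"
        using pr_id_sq[OF mT gT, of A] chain by (metis seq_assoc)
      also have "\<dots> = pr (sq (pr (idd A) h) \<Gamma>) (sq (eff T0 (o_comp T0 B A)) \<Psi>s)"
        unfolding Q2_def par_assoc[symmetric] using interchange[OF GT(1) iAh PsST(1) eff_T] .
      finally show ?thesis using PsST(2) by (simp add: pr_one_right)
    qed
    obtain t\<Gamma> where t\<Gamma>: "t\<Gamma> \<in> tests II (o_comp T0 A X)" "\<Gamma> \<in> set t\<Gamma>" using T_in_test[OF GT(1)] by blast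
    have "map (pr (idd B)) t\<Gamma> \<in> tests B R"
      using tests_par_single_l[OF t\<Gamma>(1), of B] unfolding R_def by simp
    then have T1: "[G1] @ map (pr (idd B)) (remove1 \<Gamma> t\<Gamma>) \<in> tests B R"
      unfolding G1_def by (rule tests_perm) (metis map_append mset_map list.simps(8,9) mset_rem[OF t\<Gamma>(2)])
    obtain tK where tK: "tK \<in> tests R R'" "K \<in> set tK" using T_in_test[OF KT] by blast
    obtain zs1 where "concat (map (\<lambda>x. map (\<lambda>f. sq f x) [K]) [G1]) @ zs1 \<in> tests B R'"
      using push[OF T1 tK(1) mset_rem[OF tK(2)]] by blast
    then have T2: "[m] @ zs1 \<in> tests B R'" unfolding m_def by simp
    define gt where "gt = map (\<lambda>h. pr h (eff T0 (o_comp T0 B A))) b2"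
    have gtT: "gt \<in> tests R' II" unfolding gt_def R'_def using tests_par_single_r[OF b2T eff_test] by simp
    obtain zs where "concat (map (\<lambda>x. map (\<lambda>f. sq f x) gt) [m]) @ zs \<in> tests B II"
      using push[OF T2 gtT, of gt "[]"] by auto
    then have T3: "map (\<lambda>f. sq f m) gt @ zs \<in> tests B II" by simp
    have gtn: "length gt = n" unfolding gt_def using b2n(1) by simp
    then obtain g0 gr where g0: "gt = g0 # gr" using n1 by (cases gt) auto
    have "sq g0 m # zs @ map (\<lambda>f. sq f m) gr \<in> tests B II"
      using T3 unfolding g0 by (rule tests_perm) simp
    then have T4: "(sq g0 m + sum_list zs) # map (\<lambda>f. sq f m) gr \<in> tests B II" by (rule coarse_gen)
    have "eff T0 B = sum_list ((sq g0 m + sum_list zs) # map (\<lambda>f. sq f m) gr)"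
      using sum_test_eff[OF T4] by simp
    also have "\<dots> = sq (sum_list gt) m + sum_list zs" unfolding g0 by (simp add: sq_ladd sq_lsum ac_simps)
    finally have zs0: "eff T0 B = sq (sum_list gt) m + sum_list zs" .
    have "sum_list gt = eff T0 R'"
    proof -
      have "sum_list b2 = pr (eff T0 C) (eff T0 Dd)"
      proof -
        have "ts \<noteq> []" using n1 D(2) by auto
        then show ?thesis unfolding b2_def using sum_test_eff[OF D(1)] by (simp add: pr_lsum[symmetric])
      qed
      then show ?thesis unfolding gt_def R'_def X_def by (simp add: pr_lsum[symmetric] eff_comp par_assoc)
    qed
    moreover have "sq (eff T0 R') m = eff T0 B"
    proof -
      have "sq (eff T0 R') m = sq (eff T0 R) G1"
        unfolding m_def K_def using UT V1T by (simp add: seq_assoc)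
      also have "\<dots> = pr (sq (eff T0 B) (idd B)) (sq (eff T0 (o_comp T0 A X)) \<Gamma>)"
        unfolding effR G1_def using interchange[OF id_T eff_T GT(1) eff_T] .
      finally show ?thesis using GT(2) seq_id_right[OF eff_T[of B]] by (simp add: pr_one_right)
    qed
    ultimately have "sum_list zs = 0" using zs0 by simp
    then have bt: "map (\<lambda>f. sq f m) gt \<in> tests B II" using T4 unfolding g0 by simp
    show ?thesis
    proof (rule bexI[OF _ bt], intro conjI allI impI)
      show "length (map (\<lambda>f. sq f m) gt) = n" using gtn by simp
      fix i assume i: "i < n"
      have "map (\<lambda>f. sq f m) gt ! i = sq (pr (b2!i) (eff T0 (o_comp T0 B A))) m"
        unfolding gt_def using i b2n(1) by simp
      then show "\<rho>s ! i = sq (pr (idd A) (map (\<lambda>f. sq f m) gt ! i)) \<Psi>"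
        using hh[of "b2!i"] G_j[OF i] tests_T[OF b2T] nth_mem b2n(1) i by (metis subsetD)
    qed
  qed
  show ?thesis using part1 part2 unfolding n_def \<rho>_def by blast
qed

end

theorem mainTheorem3:
  fixes T0 :: "('s, 't::real_normed_vector) opt_struct"
    and A B :: 's and \<rho>s :: "'t list" and \<Psi> :: 't
  assumes "opt_purif T0"
    and "\<rho>s \<in> o_tests T0 (o_I T0) A"
    and "purification T0 A B (sum_list \<rho>s) \<Psi>"
  shows "(\<exists>b \<in> o_tests T0 B (o_I T0). length b = length \<rho>s \<and>
            (\<forall>i < length \<rho>s. \<rho>s ! i = o_seq T0 (o_par T0 (o_id T0 A) (b ! i)) \<Psi>))
       \<and> (\<exists>B' \<Psi>'. purification T0 A B' (sum_list \<rho>s) \<Psi>' \<and>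
            (\<exists>b \<in> o_tests T0 B' (o_I T0). length b = length \<rho>s \<and>
               (\<forall>i < length \<rho>s. \<rho>s ! i = o_seq T0 (o_par T0 (o_id T0 A) (b ! i)) \<Psi>') \<and>
               (\<exists>\<sigma>. (\<forall>i < length \<rho>s. \<sigma> i \<in> normalized_states T0 B') \<and>
                  (\<forall>i < length \<rho>s. \<forall>j < length \<rho>s.
                     o_seq T0 (b ! j) (\<sigma> i) = (if i = j then one T0 else 0)))))"
proof -
  interpret opt_purif T0 by fact
  show ?thesis using main[OF assms(2,3)] .
qed

end
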